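(* Let $T:X\rightrightarrows X^*$ be a multivalued operator and $K\subset X$. If $T$ is pseudomonotone, then $$S(T,K)\subset S(T^\rho,K)\subset M(T,K)\quad\text{and}\quad S(T,K)\subset M(T^\rho,K)\subset M(T,K).$$ If $T$ is monotone, then moreover $$S(T,K)\subset S(T^\mu,K)\subset S(T^\rho,K)\quad\text{and}\quad M(T^\rho,K)\subset M(T^\mu,K)\subset M(T,K).$$
   Context: $X$ is a real Banach space with dual $X^*$ and pairing $\langle x,x^*\rangle=x^*(x)$. A multivalued operator $T:X\rightrightarrows X^*$ is identified with its graph $T\subset X\times X^*$; $T(x)=\{x^*:(x,x^* )\in T\}$. For $K\subset X$: $S(T,K)=\{x\in K: \exists x^*\in T(x),\ \langle y-x,x^*\rangle\ge0\ \forall y\in K\}$ and $M(T,K)=\{x\in K: \langle x-y,y^*\rangle\le0\ \forall (y,y^* )\in T \text{ with } y\in K\}$. For $(x,x^* ),(y,y^* )\in X\times X^*$, write $(x,x^* )\sim_p(y,y^* )$ if either $\min\{\langle x-y,y^*\rangle,\langle y-x,x^*\rangle\}<0$ or $\langle x-y,y^*\rangle=\langle y-x,x^*\rangle=0$. The pseudomonotone polar is $T^\rho=\{(x,x^* ): (x,x^* )\sim_p(y,y^* )\ \forall (y,y^* )\in T\}$; the monotone polar is $T^\mu=\{(x,x^* ): \langle x-y,x^*-y^*\rangle\ge0\ \forall (y,y^* )\in T\}$. $T$ is pseudomonotone if for all $(x,x^* ),(y,y^* )\in T$, $\langle y-x,x^*\rangle\ge0$ implies $\langle y-x,y^*\rangle\ge0$;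 $T$ is monotone if $\langle x-y,x^*-y^*\rangle\ge0$ for all $(x,x^* ),(y,y^* )\in T$. *)

theory Defs
  imports "HOL-Analysis.Analysis"
begin

text \<open>X is a real Banach space (type class banach), X^* is the space of bounded
linear functionals 'a \<Rightarrow>L real; the pairing is blinfun_apply.
A multivalued operator is identified with its graph.\<close>

type_synonym 'a mop = "('a \<times> ('a \<Rightarrow>\<^sub>L real)) set"

definition pair :: "'a::banach \<Rightarrow> ('a \<Rightarrow>\<^sub>L real) \<Rightarrow> real" where
  "pair x xs = blinfun_apply xs x"

definition Sol :: "'a::banach mop \<Rightarrow> 'a set \<Rightarrow> 'a set" where
  "Sol T K = {x \<in> K. \<exists>xs. (x, xs) \<in> T \<and> (\<forall>y\<in>K. pair (y - x) xs \<ge> 0)}"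

definition Minty :: "'a::banach mop \<Rightarrow> 'a set \<Rightarrow> 'a set" where
  "Minty T K = {x \<in> K. \<forall>y ys. (y, ys) \<in> T \<and> y \<in> K \<longrightarrow> pair (x - y) ys \<le> 0}"

definition prel :: "('a::banach \<times> ('a \<Rightarrow>\<^sub>L real)) \<Rightarrow> ('a \<times> ('a \<Rightarrow>\<^sub>L real)) \<Rightarrow> bool" where
  "prel p q = (let (x, xs) = p; (y, ys) = q in
     min (pair (x - y) ys) (pair (y - x) xs) < 0 \<or>
     (pair (x - y) ys = 0 \<and> pair (y - x) xs = 0))"

definition ppolar :: "'a::banach mop \<Rightarrow> 'a mop" where
  "ppolar T = {p. \<forall>q\<in>T. prel p q}"

definition mpolar :: "'a::banach mop \<Rightarrow> 'a mop" where
  "mpolar T = {(x, xs). \<forall>(y, ys)\<in>T. pair (x - y) (xs - ys) \<ge> 0}"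

definition pseudomonotone :: "'a::banach mop \<Rightarrow> bool" where
  "pseudomonotone T = (\<forall>x xs y ys. (x, xs) \<in> T \<and> (y, ys) \<in> T \<longrightarrow>
     pair (y - x) xs \<ge> 0 \<longrightarrow> pair (y - x) ys \<ge> 0)"

definition monotone_op :: "'a::banach mop \<Rightarrow> bool" where
  "monotone_op T = (\<forall>x xs y ys. (x, xs) \<in> T \<and> (y, ys) \<in> T \<longrightarrow>
     pair (x - y) (xs - ys) \<ge> 0)"

end

theory Submission
  imports Defs
begin

lemma pair_swap: "pair (x - y) f = - pair (y - x) f"
  unfolding pair_def by (metis blinfun.minus_right minus_diff_eq)

lemma pair_diff2: "pair u (f - g) = pair u f - pair u g"
  unfolding pair_def by (simp add: blinfun.diff_left)

lemma prel_iff: "prel (x, xs) (y, ys) \<longleftrightarrow>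
   (min (pair (x - y) ys) (pair (y - x) xs) < 0 \<or>
     (pair (x - y) ys = 0 \<and> pair (y - x) xs = 0))"
  unfolding prel_def by simp

lemma pm_sub: assumes "pseudomonotone T" shows "T \<subseteq> ppolar T"
proof
  fix p assume p: "p \<in> T"
  obtain x xs where px: "p = (x, xs)" by fastforce
  have "prel (x, xs) (y, ys)" if q: "(y, ys) \<in> T" for y ys
  proof -
    have a: "pair (y - x) xs \<ge> 0 \<longrightarrow> pair (y - x) ys \<ge> 0"
      using assms p q px unfolding pseudomonotone_def by blast
    have b: "pair (x - y) ys \<ge> 0 \<longrightarrow> pair (x - y) xs \<ge> 0"
      using assms p q px unfolding pseudomonotone_def by blast
    show ?thesis unfolding prel_iff using a b pair_swap[of x y ys] pair_swap[of x y xs]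
      by (auto simp: min_def)
  qed
  thus "p \<in> ppolar T" unfolding ppolar_def px by auto
qed

lemma mono_sub: assumes "monotone_op T" shows "T \<subseteq> mpolar T"
  using assms unfolding monotone_op_def mpolar_def by auto

lemma mu_rho: "mpolar T \<subseteq> ppolar T"
proof
  fix p assume p: "p \<in> mpolar T"
  obtain x xs where px: "p = (x, xs)" by fastforce
  have "prel (x, xs) (y, ys)" if q: "(y, ys) \<in> T" for y ys
  proof -
    have "pair (x - y) (xs - ys) \<ge> 0" using p q px unfolding mpolar_def by auto
    hence "pair (x - y) ys + pair (y - x) xs \<le> 0"
      using pair_diff2[of "x-y" xs ys] pair_swap[of x y xs] by simp
    thus ?thesis unfolding prel_iff by (auto simp: min_def)
  qed
  thus "p \<in> ppolar T" unfolding ppolar_def px by auto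
qed

lemma sol_mono: "A \<subseteq> B \<Longrightarrow> Sol A K \<subseteq> Sol B K"
  unfolding Sol_def by blast

lemma minty_anti: "A \<subseteq> B \<Longrightarrow> Minty B K \<subseteq> Minty A K"
  unfolding Minty_def by blast

lemma solrho_minty: "Sol (ppolar T) K \<subseteq> Minty T K"
proof
  fix x assume "x \<in> Sol (ppolar T) K"
  then obtain xs where x: "x \<in> K" "(x, xs) \<in> ppolar T" "\<forall>y\<in>K. pair (y - x) xs \<ge> 0"
    unfolding Sol_def by blast
  have "pair (x - y) ys \<le> 0" if "(y, ys) \<in> T" "y \<in> K" for y ys
  proof -
    have "prel (x, xs) (y, ys)" using x(2) that unfolding ppolar_def by auto
    thus ?thesis unfolding prel_iff using x(3) that by (auto simp: min_def split: if_splits)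
  qed
  thus "x \<in> Minty T K" unfolding Minty_def using x by auto
qed

lemma sol_mintyrho: "Sol T K \<subseteq> Minty (ppolar T) K"
proof
  fix x assume "x \<in> Sol T K"
  then obtain xs where x: "x \<in> K" "(x, xs) \<in> T" "\<forall>y\<in>K. pair (y - x) xs \<ge> 0"
    unfolding Sol_def by blast
  have "pair (x - y) ys \<le> 0" if "(y, ys) \<in> ppolar T" "y \<in> K" for y ys
  proof -
    have "prel (y, ys) (x, xs)" using x(2) that unfolding ppolar_def by auto
    thus ?thesis unfolding prel_iff using x(3) that by (auto simp: min_def split: if_splits)
  qed
  thus "x \<in> Minty (ppolar T) K" unfolding Minty_def using x by auto
qed

theorem mainTheorem20:
  fixes T :: "('a::banach \<times> ('a \<Rightarrow>\<^sub>L real)) set" and K :: "'a set"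
  shows "(pseudomonotone T \<longrightarrow>
            Sol T K \<subseteq> Sol (ppolar T) K \<and> Sol (ppolar T) K \<subseteq> Minty T K \<and>
            Sol T K \<subseteq> Minty (ppolar T) K \<and> Minty (ppolar T) K \<subseteq> Minty T K)
       \<and> (monotone_op T \<longrightarrow>
            Sol T K \<subseteq> Sol (mpolar T) K \<and> Sol (mpolar T) K \<subseteq> Sol (ppolar T) K \<and>
            Minty (ppolar T) K \<subseteq> Minty (mpolar T) K \<and> Minty (mpolar T) K \<subseteq> Minty T K)"
proof (intro conjI impI)
  assume h: "pseudomonotone T"
  show "Sol T K \<subseteq> Sol (ppolar T) K" by (rule sol_mono[OF pm_sub[OF h]])
  show "Sol (ppolar T) K \<subseteq> Minty T K" by (rule solrho_minty)
  show "Sol T K \<subseteq> Minty (ppolar T) K" by (rule sol_mintyrho)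
  show "Minty (ppolar T) K \<subseteq> Minty T K" by (rule minty_anti[OF pm_sub[OF h]])
next
  assume h: "monotone_op T"
  show "Sol T K \<subseteq> Sol (mpolar T) K" by (rule sol_mono[OF mono_sub[OF h]])
  show "Sol (mpolar T) K \<subseteq> Sol (ppolar T) K" by (rule sol_mono[OF mu_rho])
  show "Minty (ppolar T) K \<subseteq> Minty (mpolar T) K" by (rule minty_anti[OF mu_rho])
  show "Minty (mpolar T) K \<subseteq> Minty T K" by (rule minty_anti[OF mono_sub[OF h]])
qed

end
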